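(* Let $f\in\mathbf{SB}_n$ be nonconstant. If $\deg(f)$ is not a power of $2$, then $\mathcal{AI}(f)<2^{\lfloor\log_2\deg(f)\rfloor}$. Consequently, every nonconstant $f\in\mathbf{SB}_n$ satisfies $\mathcal{AI}(f)\le 2^{\lfloor\log_2\deg(f)\rfloor}$.
   Context: $\mathbf{SB}_n$ is the set of symmetric Boolean functions on $n$ variables; $\deg$ is the algebraic degree. The algebraic immunity is $\mathcal{AI}(f)=\min\{\deg(g): g\neq0,\ gf=0 \text{ or } g(f+1)=0\}$. *)

theory Defs
  imports Complex_Main
begin

text \<open>A Boolean function on n variables is represented as a predicate on
  supports x \<subseteq> {..<n} (x is the set of coordinates equal to 1);
  values outside Pow {..<n} are irrelevant.\<close>

definition anf_rep :: "nat \<Rightarrow> (nat set \<Rightarrow> bool) \<Rightarrow> (nat set \<Rightarrow> bool) \<Rightarrow> bool" where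
  "anf_rep n a f \<longleftrightarrow> (\<forall>S. a S \<longrightarrow> S \<subseteq> {..<n}) \<and>
     (\<forall>x. x \<subseteq> {..<n} \<longrightarrow> f x = odd (card {S. S \<subseteq> x \<and> a S}))"

definition alg_deg :: "nat \<Rightarrow> (nat set \<Rightarrow> bool) \<Rightarrow> nat" where
  "alg_deg n f = (LEAST d. \<exists>a. anf_rep n a f \<and> (\<forall>S. a S \<longrightarrow> card S \<le> d))"

definition is_zero_fun :: "nat \<Rightarrow> (nat set \<Rightarrow> bool) \<Rightarrow> bool" where
  "is_zero_fun n g \<longleftrightarrow> (\<forall>x. x \<subseteq> {..<n} \<longrightarrow> \<not> g x)"

definition symmetric_bf :: "nat \<Rightarrow> (nat set \<Rightarrow> bool) \<Rightarrow> bool" where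
  "symmetric_bf n f \<longleftrightarrow> (\<forall>x y. x \<subseteq> {..<n} \<longrightarrow> y \<subseteq> {..<n} \<longrightarrow> card x = card y \<longrightarrow> f x = f y)"

definition nonconstant_bf :: "nat \<Rightarrow> (nat set \<Rightarrow> bool) \<Rightarrow> bool" where
  "nonconstant_bf n f \<longleftrightarrow> (\<exists>x y. x \<subseteq> {..<n} \<and> y \<subseteq> {..<n} \<and> f x \<noteq> f y)"

definition alg_immunity :: "nat \<Rightarrow> (nat set \<Rightarrow> bool) \<Rightarrow> nat" where
  "alg_immunity n f = (LEAST d. \<exists>g. \<not> is_zero_fun n g \<and>
      (is_zero_fun n (\<lambda>x. g x \<and> f x) \<or> is_zero_fun n (\<lambda>x. g x \<and> \<not> f x)) \<and>
      alg_deg n g = d)"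

end

theory Submission imports Defs begin

lemma binom_pow2_even:
  assumes "0 < j" "j < (2::nat)^m" shows "even ((2^m) choose j)"
proof (rule ccontr)
  assume o: "odd ((2^m) choose j)"
  define N where "N = (2::nat)^m"
  have N1: "N \<ge> 1" by (simp add: N_def)
  have "Suc (N-1) * ((N-1) choose (j-1)) = (Suc (N-1) choose Suc (j-1)) * Suc (j-1)"
    by (rule Suc_times_binomial_eq)
  hence eq: "N * ((N-1) choose (j-1)) = (N choose j) * j" using N1 assms(1) by simp
  have "coprime (2^m) (N choose j)" using o N_def by (simp add: coprime_power_left_iff)
  moreover have "2^m dvd (N choose j) * j" using eq N_def by (metis dvd_triv_left)
  ultimately have "2^m dvd j" by (simp add: coprime_dvd_mult_right_iff)
  thus False using assms by (meson nat_dvd_not_less)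
qed

lemma sum_pow2:
  "even (\<Sum>j\<le>(2::nat)^m. ((2^m) choose j) * G j) \<longleftrightarrow> even (G 0 + G (2^m))"
proof -
  define N where "N = (2::nat)^m"
  have N1: "N \<ge> 1" by (simp add: N_def)
  have split: "{..N} = insert 0 (insert N {1..<N})" using N1 by auto
  have ev: "even (\<Sum>j\<in>{1..<N}. (N choose j) * G j)"
    by (rule dvd_sum) (use binom_pow2_even N_def in auto)
  have "(\<Sum>j\<le>N. (N choose j) * G j) = G 0 + (G N + (\<Sum>j\<in>{1..<N}. (N choose j) * G j))"
    using N1 by (simp add: split)
  thus ?thesis using ev N_def by simp
qed

lemma card_by_size:
  assumes "finite Z"
  shows "card {S. S \<subseteq> Z \<and> P (card S)} = (\<Sum>j\<le>card Z. if P j then card Z choose j else 0)"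
proof -
  have "{S. S \<subseteq> Z \<and> P (card S)} = (\<Union>j\<in>{j. j \<le> card Z \<and> P j}. {S. S \<subseteq> Z \<and> card S = j})"
    using assms by (auto intro: card_mono)
  hence "card {S. S \<subseteq> Z \<and> P (card S)} = (\<Sum>j\<in>{j. j \<le> card Z \<and> P j}. card {S. S \<subseteq> Z \<and> card S = j})"
    using assms by (simp add: card_UN_disjoint finite_subset[of _ "Pow Z"] disjoint_iff)
  also have "\<dots> = (\<Sum>j\<in>{j. j \<le> card Z \<and> P j}. card Z choose j)"
    using assms by (simp add: n_subsets)
  also have "\<dots> = (\<Sum>j\<le>card Z. if P j then card Z choose j else 0)"
    by (simp add: sum.If_cases Collect_conj_eq atMost_def Int_commute)
  finally show ?thesis .
qed

lemma par_card:
  assumes "finite A" shows "even (card {x\<in>A. odd (c x)}) \<longleftrightarrow> even (\<Sum>x\<in>A. c x :: nat)"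
  using assms
proof (induction A rule: finite_induct)
  case empty then show ?case by simp
next
  case (insert a A)
  show ?case
  proof (cases "odd (c a)")
    case True
    hence "{x\<in>insert a A. odd (c x)} = insert a {x\<in>A. odd (c x)}" by auto
    thus ?thesis using insert True by auto
  next
    case False
    hence "{x\<in>insert a A. odd (c x)} = {x\<in>A. odd (c x)}" by auto
    thus ?thesis using insert False by auto
  qed
qed

lemma card_supersets:
  assumes "finite Z" "W \<subseteq> Z" shows "card {S. S \<subseteq> Z \<and> W \<subseteq> S} = 2 ^ card (Z - W)"
proof -
  have "{S. S \<subseteq> Z \<and> W \<subseteq> S} = (\<lambda>U. U \<union> W) ` Pow (Z - W)" 
  proof (rule set_eqI, rule iffI)
    fix S assume "S \<in> {S. S \<subseteq> Z \<and> W \<subseteq> S}"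
    hence "S = (S - W) \<union> W" "S - W \<in> Pow (Z - W)" by auto
    thus "S \<in> (\<lambda>U. U \<union> W) ` Pow (Z - W)" by blast
  qed (use assms in auto)
  moreover have "inj_on (\<lambda>U. U \<union> W) (Pow (Z - W))" by (auto simp: inj_on_def)
  ultimately show ?thesis using assms by (simp add: card_image card_Pow)
qed


lemma card_filter_sum: "finite A \<Longrightarrow> card {x\<in>A. P x} = (\<Sum>x\<in>A. if P x then 1 else (0::nat))"
  by (simp add: sum.If_cases Int_def)

definition mob :: "nat \<Rightarrow> (nat set \<Rightarrow> bool) \<Rightarrow> nat set \<Rightarrow> bool" where
  "mob n g S \<longleftrightarrow> S \<subseteq> {..<n} \<and> odd (card {T. T \<subseteq> S \<and> g T})"

lemma mob_rep: "anf_rep n (mob n g) g"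
  unfolding anf_rep_def
proof (intro conjI allI impI)
  fix S assume "mob n g S" thus "S \<subseteq> {..<n}" by (simp add: mob_def)
next
  fix x :: "nat set" assume x: "x \<subseteq> {..<n}"
  have fx: "finite x" using x finite_subset by blast
  define c where "c S = card {T. T \<subseteq> S \<and> g T}" for S
  have e1: "{S. S \<subseteq> x \<and> mob n g S} = {S\<in>Pow x. odd (c S)}"
    using x by (auto simp: mob_def c_def)
  have c_eq: "c S = (\<Sum>T\<in>Pow x. if T \<subseteq> S \<and> g T then 1 else 0)" if "S \<subseteq> x" for S
  proof -
    have "{T. T \<subseteq> S \<and> g T} = {T\<in>Pow x. T \<subseteq> S \<and> g T}" using that by auto
    thus ?thesis unfolding c_def using fx card_filter_sum[of "Pow x" "\<lambda>T. T \<subseteq> S \<and> g T"] by simp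
  qed
  have "(\<Sum>S\<in>Pow x. c S) = (\<Sum>S\<in>Pow x. \<Sum>T\<in>Pow x. if T \<subseteq> S \<and> g T then 1 else 0)"
    by (rule sum.cong) (auto simp: c_eq)
  also have "\<dots> = (\<Sum>T\<in>Pow x. \<Sum>S\<in>Pow x. if T \<subseteq> S \<and> g T then 1 else 0)"
    by (rule sum.swap)
  also have "\<dots> = (\<Sum>T\<in>Pow x. if g T then 2 ^ card (x - T) else 0)"
  proof (rule sum.cong[OF refl])
    fix T assume T: "T \<in> Pow x"
    have "(\<Sum>S\<in>Pow x. if T \<subseteq> S \<and> g T then 1 else (0::nat)) = (if g T then card {S\<in>Pow x. T \<subseteq> S} else 0)"
      using fx card_filter_sum[of "Pow x" "\<lambda>S. T \<subseteq> S"] by simp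
    also have "{S\<in>Pow x. T \<subseteq> S} = {S. S \<subseteq> x \<and> T \<subseteq> S}" by auto
    finally show "(\<Sum>S\<in>Pow x. if T \<subseteq> S \<and> g T then 1 else (0::nat)) = (if g T then 2 ^ card (x - T) else 0)"
      using card_supersets[OF fx] T by simp
  qed
  also have "\<dots> = (if g x then 1 else 0) + (\<Sum>T\<in>Pow x - {x}. if g T then 2 ^ card (x - T) else 0)"
    using fx by (subst sum.remove[of _ x]) auto
  finally have sumeq: "(\<Sum>S\<in>Pow x. c S) = (if g x then 1 else 0) + (\<Sum>T\<in>Pow x - {x}. if g T then 2 ^ card (x - T) else 0)" .
  have ev: "even (\<Sum>T\<in>Pow x - {x}. if g T then 2 ^ card (x - T) else (0::nat))"
  proof (rule dvd_sum)
    fix T assume "T \<in> Pow x - {x}"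
    hence "x - T \<noteq> {}" by auto
    hence "card (x - T) \<noteq> 0" using fx by simp
    thus "even (if g T then 2 ^ card (x - T) else (0::nat))" by simp
  qed
  have "even (card {S\<in>Pow x. odd (c S)}) \<longleftrightarrow> even (\<Sum>S\<in>Pow x. c S)"
    using fx by (intro par_card) simp
  thus "g x = odd (card {S. S \<subseteq> x \<and> mob n g S})"
    using e1 sumeq ev by auto
qed

lemma subcube_even:
  assumes rep: "anf_rep n a f" and deg: "\<And>S. a S \<Longrightarrow> card S < card Z"
    and fin: "finite Z" and disj: "y \<inter> Z = {}" and sub: "y \<union> Z \<subseteq> {..<n}"
  shows "even (card {S. S \<subseteq> Z \<and> f (y \<union> S)})"
proof -
  define U where "U = y \<union> Z"
  have fU: "finite U" using sub U_def finite_subset by blast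
  have aU: "a T \<Longrightarrow> T \<subseteq> {..<n}" for T using rep by (simp add: anf_rep_def)
  define c where "c S = card {T. T \<subseteq> y \<union> S \<and> a T}" for S
  have fS: "f (y \<union> S) = odd (c S)" if "S \<subseteq> Z" for S
    using rep sub that unfolding anf_rep_def c_def by auto
  have e1: "{S. S \<subseteq> Z \<and> f (y \<union> S)} = {S\<in>Pow Z. odd (c S)}" using fS by auto
  have c_eq: "c S = (\<Sum>T\<in>Pow U. if T \<subseteq> y \<union> S \<and> a T then 1 else 0)" if "S \<subseteq> Z" for S
  proof -
    have "{T. T \<subseteq> y \<union> S \<and> a T} = {T\<in>Pow U. T \<subseteq> y \<union> S \<and> a T}" using that U_def by auto
    thus ?thesis unfolding c_def using fU card_filter_sum[of "Pow U" "\<lambda>T. T \<subseteq> y \<union> S \<and> a T"] by simp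
  qed
  have "(\<Sum>S\<in>Pow Z. c S) = (\<Sum>S\<in>Pow Z. \<Sum>T\<in>Pow U. if T \<subseteq> y \<union> S \<and> a T then 1 else 0)"
    by (rule sum.cong) (auto simp: c_eq)
  also have "\<dots> = (\<Sum>T\<in>Pow U. \<Sum>S\<in>Pow Z. if T \<subseteq> y \<union> S \<and> a T then 1 else 0)"
    by (rule sum.swap)
  finally have sumeq: "(\<Sum>S\<in>Pow Z. c S) = (\<Sum>T\<in>Pow U. \<Sum>S\<in>Pow Z. if T \<subseteq> y \<union> S \<and> a T then 1 else 0)" .
  have ev: "even (\<Sum>T\<in>Pow U. \<Sum>S\<in>Pow Z. if T \<subseteq> y \<union> S \<and> a T then 1 else (0::nat))"
  proof (rule dvd_sum)
    fix T assume T: "T \<in> Pow U"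
    show "even (\<Sum>S\<in>Pow Z. if T \<subseteq> y \<union> S \<and> a T then 1 else (0::nat))"
    proof (cases "a T")
      case False thus ?thesis by simp
    next
      case True
      have "(\<Sum>S\<in>Pow Z. if T \<subseteq> y \<union> S \<and> a T then 1 else (0::nat)) = card {S\<in>Pow Z. T \<subseteq> y \<union> S}"
        using fin True card_filter_sum[of "Pow Z" "\<lambda>S. T \<subseteq> y \<union> S"] by simp
      also have "{S\<in>Pow Z. T \<subseteq> y \<union> S} = {S. S \<subseteq> Z \<and> T \<inter> Z \<subseteq> S}"
        using T U_def disj by auto
      also have "card \<dots> = 2 ^ card (Z - T \<inter> Z)" by (rule card_supersets[OF fin]) auto
      finally have eq: "(\<Sum>S\<in>Pow Z. if T \<subseteq> y \<union> S \<and> a T then 1 else (0::nat)) = 2 ^ card (Z - T \<inter> Z)" .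
      have "\<not> Z \<subseteq> T"
      proof
        assume "Z \<subseteq> T"
        moreover have "finite T" using aU[OF True] finite_subset by blast
        ultimately have "card Z \<le> card T" by (simp add: card_mono)
        thus False using deg[OF True] by simp
      qed
      hence "Z - T \<inter> Z \<noteq> {}" by auto
      hence "card (Z - T \<inter> Z) \<noteq> 0" using fin by simp
      thus ?thesis using eq by simp
    qed
  qed
  have "even (card {S\<in>Pow Z. odd (c S)}) \<longleftrightarrow> even (\<Sum>S\<in>Pow Z. c S)"
    using fin by (intro par_card) simp
  thus ?thesis using e1 sumeq ev by simp
qed


lemma deg_le: "anf_rep n a f \<Longrightarrow> (\<And>S. a S \<Longrightarrow> card S \<le> D) \<Longrightarrow> alg_deg n f \<le> D"
  unfolding alg_deg_def by (rule Least_le) blast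

lemma deg_rep: "\<exists>a. anf_rep n a f \<and> (\<forall>S. a S \<longrightarrow> card S \<le> alg_deg n f)"
proof -
  have "\<exists>a. anf_rep n a f \<and> (\<forall>S. a S \<longrightarrow> card S \<le> n)"
  proof (intro exI conjI allI impI)
    show "anf_rep n (mob n f) f" by (rule mob_rep)
    fix S assume "mob n f S"
    hence "S \<subseteq> {..<n}" by (simp add: mob_def)
    thus "card S \<le> n" using card_mono[of "{..<n}" S] by simp
  qed
  hence "\<exists>d. \<exists>a. anf_rep n a f \<and> (\<forall>S. a S \<longrightarrow> card S \<le> d)" by blast
  thus ?thesis unfolding alg_deg_def by (rule LeastI_ex)
qed

lemma pascal_sum:
  "(\<Sum>j\<le>Suc s. (Suc s choose j) * G j) = (\<Sum>j\<le>s. (s choose j) * G j) + (\<Sum>j\<le>s. (s choose j) * G (Suc j))"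
proof -
  have "(\<Sum>j\<le>Suc s. (Suc s choose j) * G j) = G 0 + (\<Sum>i\<le>s. (Suc s choose Suc i) * G (Suc i))"
    by (subst sum.atMost_Suc_shift) simp
  also have "\<dots> = G 0 + (\<Sum>i\<le>s. (s choose Suc i) * G (Suc i)) + (\<Sum>i\<le>s. (s choose i) * G (Suc i))"
    by (simp add: sum.distrib[symmetric] algebra_simps)
  also have "G 0 + (\<Sum>i\<le>s. (s choose Suc i) * G (Suc i)) = (\<Sum>j\<le>Suc s. (s choose j) * G j)"
    by (subst sum.atMost_Suc_shift) simp
  also have "\<dots> = (\<Sum>j\<le>s. (s choose j) * G j)" by simp
  finally show ?thesis .
qed

lemma even_periodic_sum:
  assumes "N = (2::nat)^m" "N \<le> s"
  shows "\<forall>u. (\<forall>j. u j = u (j mod N)) \<longrightarrow> even (\<Sum>j\<le>s. (s choose j) * (if u j then 1 else 0))"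
  using assms(2)
proof (induction s rule: dec_induct)
  case base
  show ?case
  proof (intro allI impI)
    fix u :: "nat \<Rightarrow> bool" assume p: "\<forall>j. u j = u (j mod N)"
    have "u N = u 0" using p by (metis mod_self)
    thus "even (\<Sum>j\<le>N. (N choose j) * (if u j then 1 else 0))"
      using sum_pow2[of m "\<lambda>j. if u j then 1 else 0"] assms(1) by simp
  qed
next
  case (step s)
  show ?case
  proof (intro allI impI)
    fix u :: "nat \<Rightarrow> bool" assume p: "\<forall>j. u j = u (j mod N)"
    have p2: "\<forall>j. u (Suc j) = u (Suc (j mod N))" using p by (metis mod_Suc_eq)
    have "\<forall>j. (\<lambda>j. u (Suc j)) j = (\<lambda>j. u (Suc j)) (j mod N)" using p2 by simp
    hence e2: "even (\<Sum>j\<le>s. (s choose j) * (if u (Suc j) then 1 else 0))"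
      using step.IH[rule_format, of "\<lambda>j. u (Suc j)"] by simp
    have e1: "even (\<Sum>j\<le>s. (s choose j) * (if u j then 1 else 0))" using step.IH[rule_format, of u] p by simp
    show "even (\<Sum>j\<le>Suc s. (Suc s choose j) * (if u j then 1 else 0))"
      using pascal_sum[of s "\<lambda>j. if u j then 1 else 0"] e1 e2 by simp
  qed
qed

lemma sym_periodic_deg:
  assumes "N = (2::nat)^m" "\<forall>j. u j = u (j mod N)"
  shows "alg_deg n (\<lambda>x. u (card x)) < N"
proof -
  have N1: "N \<ge> 1" using assms by simp
  have "alg_deg n (\<lambda>x. u (card x)) \<le> N - 1"
  proof (rule deg_le[OF mob_rep])
    fix S assume S: "mob n (\<lambda>x. u (card x)) S"
    hence fS: "finite S" using finite_subset by (auto simp: mob_def)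
    have o: "odd (card {T. T \<subseteq> S \<and> u (card T)})" using S by (simp add: mob_def)
    have "card {T. T \<subseteq> S \<and> u (card T)} = (\<Sum>j\<le>card S. (card S choose j) * (if u j then 1 else 0))"
      unfolding card_by_size[OF fS, of u] by (rule sum.cong) auto
    moreover have "even (\<Sum>j\<le>card S. (card S choose j) * (if u j then 1 else 0))" if "N \<le> card S"
      using even_periodic_sum[OF assms(1) that, rule_format, of u] assms(2) by blast
    ultimately have "\<not> N \<le> card S" using o by auto
    thus "card S \<le> N - 1" by simp
  qed
  thus ?thesis using N1 by simp
qed

lemma binom_shift: "odd ((w + 2^m) choose 2^m) \<longleftrightarrow> even (w choose 2^m)"
proof -
  have "(\<Sum>k\<le>2^m. ((2^m) choose k) * (w choose (2^m - k))) = (2^m + w) choose 2^m"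
    by (rule vandermonde)
  moreover have "even (\<Sum>k\<le>(2::nat)^m. ((2^m) choose k) * (w choose (2^m - k))) \<longleftrightarrow> even ((w choose 2^m) + 1)"
    using sum_pow2[of m "\<lambda>k. w choose (2^m - k)"] by simp
  ultimately show ?thesis by (simp add: add.commute)
qed

lemma binom_bit: "odd (w choose 2^m) \<longleftrightarrow> odd (w div 2^m)"
proof (induction w rule: less_induct)
  case (less w)
  show ?case
  proof (cases "w < 2^m")
    case True thus ?thesis by (simp add: binomial_eq_0)
  next
    case False
    then obtain v where v: "w = v + 2^m" by (metis add.commute le_Suc_ex not_less)
    hence "v < w" by simp
    have "w div 2^m = Suc (v div 2^m)" using v by simp
    thus ?thesis using less.IH[OF \<open>v < w\<close>] binom_shift[of v m] v by simp
  qed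
qed


lemma ai_le:
  assumes "\<not> is_zero_fun n g" "is_zero_fun n (\<lambda>x. g x \<and> f x) \<or> is_zero_fun n (\<lambda>x. g x \<and> \<not> f x)"
  shows "alg_immunity n f \<le> alg_deg n g"
  unfolding alg_immunity_def by (rule Least_le) (use assms in blast)

lemma sym_v:
  assumes "symmetric_bf n f" "x \<subseteq> {..<n}" shows "f x = f {..<card x}"
proof -
  have "card x \<le> n" using assms(2) card_mono[of "{..<n}" x] by simp
  thus ?thesis using assms unfolding symmetric_bf_def by (metis card_lessThan lessThan_subset_iff)
qed

lemma deg_pos:
  assumes "nonconstant_bf n f" shows "alg_deg n f \<ge> 1"
proof (rule ccontr)
  assume "\<not> alg_deg n f \<ge> 1"
  hence d0: "alg_deg n f = 0" by simp
  obtain a where rep: "anf_rep n a f" and dg: "\<forall>S. a S \<longrightarrow> card S \<le> alg_deg n f"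
    using deg_rep by blast
  have aS: "a S \<Longrightarrow> S = {}" for S
  proof -
    assume "a S"
    hence "S \<subseteq> {..<n}" "card S = 0" using rep dg d0 by (auto simp: anf_rep_def)
    thus "S = {}" using finite_subset by fastforce
  qed
  have "f x = a {}" if "x \<subseteq> {..<n}" for x
  proof -
    have "{S. S \<subseteq> x \<and> a S} = (if a {} then {{}} else {})" using aS by auto
    thus ?thesis using rep that by (auto simp: anf_rep_def)
  qed
  thus False using assms by (auto simp: nonconstant_bf_def)
qed

lemma ai_le_deg:
  assumes "nonconstant_bf n f" shows "alg_immunity n f \<le> alg_deg n f"
proof -
  obtain a where rep: "anf_rep n a f" and dg: "\<forall>S. a S \<longrightarrow> card S \<le> alg_deg n f"
    using deg_rep by blast
  define a' where "a' S = (if S = {} then \<not> a {} else a S)" for S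
  have rep': "anf_rep n a' (\<lambda>x. \<not> f x)"
    unfolding anf_rep_def
  proof (intro conjI allI impI)
    fix S assume "a' S" thus "S \<subseteq> {..<n}" using rep by (auto simp: a'_def anf_rep_def split: if_splits)
  next
    fix x :: "nat set" assume x: "x \<subseteq> {..<n}"
    have fin: "finite {S. S \<subseteq> x \<and> a S}" using x finite_subset[of x "{..<n}"] by simp
    have fx: "f x = odd (card {S. S \<subseteq> x \<and> a S})" using rep x by (simp add: anf_rep_def)
    show "(\<not> f x) = odd (card {S. S \<subseteq> x \<and> a' S})"
    proof (cases "a {}")
      case True
      hence "{S. S \<subseteq> x \<and> a' S} = {S. S \<subseteq> x \<and> a S} - {{}}" "{} \<in> {S. S \<subseteq> x \<and> a S}"
        by (auto simp: a'_def)
      moreover have "card {S. S \<subseteq> x \<and> a S} \<ge> 1" using calculation(2) fin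
        by (metis One_nat_def Suc_leI card_gt_0_iff empty_iff)
      ultimately show ?thesis using fx fin True by (simp add: card_Diff_singleton odd_Suc_minus_one) blast
    next
      case False
      hence "{S. S \<subseteq> x \<and> a' S} = insert {} {S. S \<subseteq> x \<and> a S}" "{} \<notin> {S. S \<subseteq> x \<and> a S}"
        by (auto simp: a'_def)
      thus ?thesis using fx fin by simp
    qed
  qed
  have "alg_deg n (\<lambda>x. \<not> f x) \<le> alg_deg n f"
    by (rule deg_le[OF rep']) (use dg in \<open>auto simp: a'_def split: if_splits\<close>)
  moreover have "alg_immunity n f \<le> alg_deg n (\<lambda>x. \<not> f x)"
    by (rule ai_le) (use assms in \<open>auto simp: is_zero_fun_def nonconstant_bf_def\<close>)
  ultimately show ?thesis by simp
qed


lemma caseA: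
  assumes sym: "symmetric_bf n f" and nc: "nonconstant_bf n f"
    and N: "N = (2::nat)^m" and lt: "N < alg_deg n f" and ub: "alg_deg n f < 2*N"
  shows "alg_immunity n f < N"
proof -
  define v where "v w = f {..<w}" for w
  have fv: "f x = v (card x)" if "x \<subseteq> {..<n}" for x using sym_v[OF sym that] v_def by simp
  have N1: "N \<ge> 1" using N by simp
  obtain a where rep: "anf_rep n a f" and dg: "\<forall>S. a S \<longrightarrow> card S \<le> alg_deg n f"
    using deg_rep by blast
  have per2: "v w = v (w + 2*N)" if w: "w + 2*N \<le> n" for w
  proof -
    define Z where "Z = {w..<w+2*N}"
    have cZ: "card Z = 2*N" by (simp add: Z_def)
    have ev: "even (card {S. S \<subseteq> Z \<and> f ({..<w} \<union> S)})"
      by (rule subcube_even[OF rep]) (use dg ub cZ w in \<open>auto simp: Z_def\<close>)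
    have "{S. S \<subseteq> Z \<and> f ({..<w} \<union> S)} = {S. S \<subseteq> Z \<and> v (w + card S)}"
    proof (intro Collect_cong conj_cong refl)
      fix S assume S: "S \<subseteq> Z"
      have "{..<w} \<union> S \<subseteq> {..<n}" using S w by (auto simp: Z_def)
      moreover have "card ({..<w} \<union> S) = w + card S"
        using S by (subst card_Un_disjoint) (auto simp: Z_def intro: finite_subset)
      ultimately show "f ({..<w} \<union> S) = v (w + card S)" using fv by simp
    qed
    also have "card \<dots> = (\<Sum>j\<le>2*N. if v (w+j) then (2*N) choose j else 0)"
      using card_by_size[of Z "\<lambda>j. v (w + j)"] unfolding cZ by (simp add: Z_def)
    also have "\<dots> = (\<Sum>j\<le>2^Suc m. ((2^Suc m) choose j) * (if v (w+j) then 1 else 0))"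
      using N by (intro sum.cong) auto
    finally have "even (\<Sum>j\<le>2^Suc m. ((2^Suc m) choose j) * (if v (w+j) then 1 else 0))"
      using ev by simp
    hence "even ((if v w then 1 else 0) + (if v (w + 2^Suc m) then 1 else (0::nat)))"
      using sum_pow2[of "Suc m" "\<lambda>j. if v (w+j) then 1 else 0"] by simp
    thus ?thesis using N by (auto split: if_splits)
  qed
  have permod: "v w = v (w mod (2*N))" if "w \<le> n" for w
    using that
  proof (induction w rule: less_induct)
    case (less w)
    show ?case
    proof (cases "w < 2*N")
      case True thus ?thesis by simp
    next
      case False
      then obtain w' where w': "w = w' + 2*N" by (metis add.commute le_Suc_ex not_less)
      have "v w' = v w" using per2[of w'] w' less.prems by simp
      moreover have "v w' = v (w' mod (2*N))" using less.IH[of w'] w' less.prems N1 by simp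
      ultimately show ?thesis using w' by simp
    qed
  qed
  have modsplit: "w mod (2*N) = w mod N + N * (w div N mod 2)" for w
    using mod_mult2_eq[of w N 2] by (simp add: mult.commute)
  show ?thesis
  proof (cases "\<exists>l<N. l \<le> n \<and> (l + N \<le> n \<longrightarrow> v (l+N) = v l)")
    case True
    then obtain l where l: "l < N" "l \<le> n" "l + N \<le> n \<longrightarrow> v (l+N) = v l" by blast
    define u where "u j = (j mod N = l)" for j
    have up: "\<forall>j. u j = u (j mod N)" by (simp add: u_def)
    have dgg: "alg_deg n (\<lambda>x. u (card x)) < N" by (rule sym_periodic_deg[OF N up])
    have vals: "f x = v l" if x: "x \<subseteq> {..<n}" "u (card x)" for x
    proof -
      define w where "w = card x"
      have wn: "w \<le> n" using x card_mono[of "{..<n}" x] by (simp add: w_def)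
      have wl: "w mod N = l" using x by (simp add: u_def w_def)
      have "v w = v l"
      proof (cases "even (w div N)")
        case True
        hence "w mod (2*N) = l" using modsplit[of w] wl by simp
        thus ?thesis using permod[OF wn] by simp
      next
        case False
        hence r: "w mod (2*N) = l + N" using modsplit[of w] wl by (simp add: odd_iff_mod_2_eq_one)
        have "w mod (2*N) \<le> w" by simp
        hence "l + N \<le> n" using r wn by simp
        thus ?thesis using permod[OF wn] r l by simp
      qed
      thus ?thesis using fv[OF x(1)] w_def by simp
    qed
    have nz: "\<not> is_zero_fun n (\<lambda>x. u (card x))"
      unfolding is_zero_fun_def using l by (auto intro!: exI[of _ "{..<l}"] simp: u_def)
    have "is_zero_fun n (\<lambda>x. u (card x) \<and> f x) \<or> is_zero_fun n (\<lambda>x. u (card x) \<and> \<not> f x)"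
      unfolding is_zero_fun_def using vals by (cases "v l") auto
    hence "alg_immunity n f \<le> alg_deg n (\<lambda>x. u (card x))" using ai_le nz by blast
    thus ?thesis using dgg by simp
  next
    case False
    hence nl: "\<And>l. l < N \<Longrightarrow> l \<le> n \<Longrightarrow> l + N \<le> n \<and> v (l+N) \<noteq> v l" by blast
    define u where "u j = v (j mod N)" for j
    have up: "\<forall>j. u j = u (j mod N)" by (simp add: u_def)
    have dgh: "alg_deg n (\<lambda>x. u (card x)) < N" by (rule sym_periodic_deg[OF N up])
    obtain b where repb: "anf_rep n b (\<lambda>x. u (card x))"
      and dgb: "\<forall>S. b S \<longrightarrow> card S \<le> alg_deg n (\<lambda>x. u (card x))"
      using deg_rep by blast
    have key: "v w = (u w \<noteq> odd (w choose N))" if wn: "w \<le> n" for w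
    proof -
      define l where "l = w mod N"
      have lN: "l < N" using N1 by (simp add: l_def)
      have ln: "l \<le> n" using wn l_def by (meson le_trans mod_less_eq_dividend)
      have bb: "odd (w choose N) \<longleftrightarrow> odd (w div N)" using binom_bit[of w m] N by simp
      show ?thesis
      proof (cases "even (w div N)")
        case True
        hence "w mod (2*N) = l" using modsplit[of w] l_def by simp
        thus ?thesis using permod[OF wn] bb True u_def l_def by simp
      next
        case False
        hence r: "w mod (2*N) = l + N" using modsplit[of w] l_def by (simp add: odd_iff_mod_2_eq_one)
        thus ?thesis using permod[OF wn] bb False u_def l_def nl[OF lN ln] by simp
      qed
    qed
    define a' where "a' S = (b S \<or> (S \<subseteq> {..<n} \<and> card S = N))" for S
    have rep': "anf_rep n a' f"
      unfolding anf_rep_def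
    proof (intro conjI allI impI)
      fix S assume "a' S" thus "S \<subseteq> {..<n}" using repb by (auto simp: a'_def anf_rep_def)
    next
      fix x :: "nat set" assume x: "x \<subseteq> {..<n}"
      have fx: "finite x" using x finite_subset by blast
      have un: "{S. S \<subseteq> x \<and> a' S} = {S. S \<subseteq> x \<and> b S} \<union> {S. S \<subseteq> x \<and> card S = N}"
        using x by (auto simp: a'_def)
      have dj: "{S. S \<subseteq> x \<and> b S} \<inter> {S. S \<subseteq> x \<and> card S = N} = {}"
        using dgb dgh by fastforce
      have c: "card {S. S \<subseteq> x \<and> a' S} = card {S. S \<subseteq> x \<and> b S} + (card x choose N)"
        unfolding un using fx dj by (subst card_Un_disjoint) (auto simp: n_subsets)
      have hx: "u (card x) = odd (card {S. S \<subseteq> x \<and> b S})" using repb x by (simp add: anf_rep_def)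
      have "card x \<le> n" using x card_mono[of "{..<n}" x] by simp
      thus "f x = odd (card {S. S \<subseteq> x \<and> a' S})" using key fv[OF x] c hx by auto
    qed
    have "alg_deg n f \<le> N"
      by (rule deg_le[OF rep']) (use dgb dgh in \<open>fastforce simp: a'_def\<close>)
    thus ?thesis using lt by simp
  qed
qed

theorem proposition1:
  fixes n :: nat and f :: "nat set \<Rightarrow> bool"
  assumes "symmetric_bf n f" and "nonconstant_bf n f"
  shows "((\<nexists>k. alg_deg n f = 2 ^ k) \<longrightarrow>
            alg_immunity n f < 2 ^ nat \<lfloor>log 2 (real (alg_deg n f))\<rfloor>)
         \<and> alg_immunity n f \<le> 2 ^ nat \<lfloor>log 2 (real (alg_deg n f))\<rfloor>"
proof -
  define d where "d = alg_deg n f"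
  have d1: "d \<ge> 1" using deg_pos[OF assms(2)] d_def by simp
  obtain m where m: "2^m \<le> d" "d < 2^(m+1)" using ex_power_ivl1[of 2 d] d1 by auto
  have fl: "nat \<lfloor>log 2 (real d)\<rfloor> = m" using floor_log_nat_eq_if[of 2 m d] m by simp
  have A: "alg_immunity n f < 2^m" if "d \<noteq> 2^m"
    using caseA[OF assms, of "2^m" m] that m d_def by simp
  have B: "alg_immunity n f \<le> 2^m"
  proof (cases "d = 2^m")
    case True thus ?thesis using ai_le_deg[OF assms(2)] d_def by simp
  next
    case False thus ?thesis using A by simp
  qed
  show ?thesis using A B fl d_def by auto
qed

end
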